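(* Let $e_1,\dots,e_m$ be a chain of distinct edges, i.e. $e_j$ and $e_{j+1}$ are linked for each $j=1,\dots,m-1$, and let $1\le i\le m$. Fix $\lambda(e_i)$ and the values of $\lambda$ on all edges not in the chain. Then $$\int\prod_{j\ne i}\frac{d\lambda(e_j)}{\lambda(e_j)}\le(\ln4)^{m-1},$$ where the integral is over the set of $(\lambda(e_j))_{j\ne i}\in(0,\infty)^{m-1}$ for which the resulting point lies in $\Delta_L$.
   Context: $\Gamma$ is a finite trivalent graph with edge set $E$. A linking choice $L$ assigns to each vertex $v$ one of its three edges, the designated minimal edge at $v$. $\Delta_L$ is the set of $\lambda\in(0,\infty)^E$ such that, at every vertex $v$ with edges $e,f,g$: - the triangle inequalities $\lambda(e)\le\lambda(f)+\lambda(g)$, $\lambda(f)\le\lambda(e)+\lambda(g)$, $\lambda(g)\le\lambda(e)+\lambda(f)$ hold, and - the designated minimal edge has $\lambda$-value at most those of the other two. Two edges are linked if they meet at a vertex whose designated minimal edge is the third edge there. *)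

theory Defs
  imports "HOL-Analysis.Analysis" "HOL-Library.Multiset"
begin

text \<open>A finite trivalent (multi)graph: finite vertex set V, finite edge set E, and for each
vertex v the multiset inc v of the three edge-ends at v (a loop at v occurs twice in inc v).\<close>
definition trivalent_graph :: "'v set \<Rightarrow> 'e set \<Rightarrow> ('v \<Rightarrow> 'e multiset) \<Rightarrow> bool" where
  "trivalent_graph V E inc \<longleftrightarrow> finite V \<and> finite E \<and>
     (\<forall>v\<in>V. size (inc v) = 3 \<and> set_mset (inc v) \<subseteq> E) \<and>
     (\<forall>e\<in>E. (\<Sum>v\<in>V. count (inc v) e) = 2)"

definition linking_choice :: "'v set \<Rightarrow> ('v \<Rightarrow> 'e multiset) \<Rightarrow> ('v \<Rightarrow> 'e) \<Rightarrow> bool" where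
  "linking_choice V inc L \<longleftrightarrow> (\<forall>v\<in>V. L v \<in># inc v)"

definition in_Delta :: "'v set \<Rightarrow> 'e set \<Rightarrow> ('v \<Rightarrow> 'e multiset) \<Rightarrow> ('v \<Rightarrow> 'e) \<Rightarrow> ('e \<Rightarrow> real) \<Rightarrow> bool" where
  "in_Delta V E inc L lam \<longleftrightarrow> (\<forall>e\<in>E. 0 < lam e) \<and>
     (\<forall>v\<in>V. \<forall>e. e \<in># inc v \<longrightarrow> lam e \<le> sum_mset (image_mset lam (inc v - {#e#}))) \<and>
     (\<forall>v\<in>V. \<forall>f. f \<in># inc v \<longrightarrow> lam (L v) \<le> lam f)"

definition linked :: "'v set \<Rightarrow> ('v \<Rightarrow> 'e multiset) \<Rightarrow> ('v \<Rightarrow> 'e) \<Rightarrow> 'e \<Rightarrow> 'e \<Rightarrow> bool" where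
  "linked V inc L e f \<longleftrightarrow> (\<exists>v\<in>V. inc v = {#e, f, L v#})"

end

theory Submission imports Defs begin

definition FF :: "real \<Rightarrow> real \<Rightarrow> real" where
  "FF a t = (if a / 2 \<le> t \<and> t \<le> 2 * a \<and> 0 < t then 1 / t else 0)"

definition yv :: "real \<Rightarrow> 'e \<Rightarrow> ('e \<Rightarrow> real) \<Rightarrow> 'e \<Rightarrow> real" where
  "yv c r x e = (if e = r then c else x e)"

lemma FF_meas2[measurable (raw)]:
  assumes [measurable]: "f \<in> borel_measurable M" "g \<in> borel_measurable M"
  shows "(\<lambda>x. FF (f x) (g x)) \<in> borel_measurable M"
  unfolding FF_def by measurable

lemma yv_meas:
  assumes "e \<in> insert r I"
  shows "(\<lambda>x. yv c r x e) \<in> borel_measurable (PiM I (\<lambda>_. lborel))"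
proof (cases "e = r")
  case True then show ?thesis by (simp add: yv_def)
next
  case False then have "e \<in> I" using assms by auto
  then show ?thesis using False by (simp add: yv_def)
qed

lemma FF_int: "(\<integral>\<^sup>+ t. ennreal (FF a t) \<partial>lborel) \<le> ennreal (ln 4)"
proof (cases "a > 0")
  case False
  then have "\<And>t. FF a t = 0" unfolding FF_def by auto
  then show ?thesis by simp
next
  case True
  have "(\<integral>\<^sup>+ t. ennreal (FF a t) \<partial>lborel) = (\<integral>\<^sup>+ t. ennreal (1 / t) * indicator {a/2 .. 2*a} t \<partial>lborel)"
    using True by (intro nn_integral_cong) (auto simp: FF_def indicator_def)
  also have "\<dots> = ln (2*a) - ln (a/2)"
    using True by (intro nn_integral_FTC_Icc) (auto intro!: derivative_eq_intros)
  also have "ln (2*a) - ln (a/2) = ln 4"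
    using True ln_mult[of 2 2] by (simp add: ln_div ln_mult)
  finally show ?thesis by simp
qed

lemma chain_int:
  fixes ks :: "'e list" and q :: "nat \<Rightarrow> 'e"
  assumes "distinct ks" "r \<notin> set ks" "\<forall>n<length ks. q n \<in> insert r (set (take n ks))"
  shows "(\<integral>\<^sup>+ x. (\<Prod>n<length ks. ennreal (FF (yv c r x (q n)) (x (ks!n)))) \<partial>PiM (set ks) (\<lambda>_. lborel))
     \<le> ennreal (ln 4) ^ length ks"
  using assms
proof (induction ks rule: rev_induct)
  case Nil then show ?case by (simp add: PiM_empty)
next
  case (snoc k ks)
  let ?M = "\<lambda>_::'e. lborel :: real measure"
  let ?G = "\<lambda>x. \<Prod>n<length ks. ennreal (FF (yv c r x (q n)) (x (ks!n)))"
  interpret product_sigma_finite ?M by standard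
  have kn: "k \<notin> set ks" "r \<noteq> k" "distinct ks" "r \<notin> set ks" using snoc.prems by auto
  have qtake: "\<forall>n<length ks. q n \<in> insert r (set (take n ks))"
  proof (intro allI impI)
    fix n assume "n < length ks"
    then show "q n \<in> insert r (set (take n ks))" using snoc.prems(3) by (auto simp: take_append)
  qed
  have IH: "integral\<^sup>N (PiM (set ks) ?M) ?G \<le> ennreal (ln 4) ^ length ks"
    using snoc.IH kn qtake by blast
  have qks: "\<And>n. n < length ks \<Longrightarrow> q n \<in> insert r (set ks)"
    using qtake in_set_takeD by fastforce
  have qk: "q (length ks) \<in> insert r (set ks)"
    using snoc.prems(3) by auto
  have Gmeas: "?G \<in> borel_measurable (PiM (set ks) ?M)"
    using qks by (intro borel_measurable_prod_ennreal measurable_compose[OF _ measurable_ennreal] FF_meas2 yv_meas) auto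
  have fmeas: "(\<lambda>x. \<Prod>n<length (ks@[k]). ennreal (FF (yv c r x (q n)) (x ((ks@[k])!n))))
      \<in> borel_measurable (PiM (insert k (set ks)) ?M)"
    using qks qk by (intro borel_measurable_prod_ennreal measurable_compose[OF _ measurable_ennreal] FF_meas2 yv_meas)
      (auto simp: nth_append less_Suc_eq)
  have eq: "(\<Prod>n<length (ks@[k]). ennreal (FF (yv c r (x(k:=t)) (q n)) ((x(k:=t)) ((ks@[k])!n))))
      = ?G x * ennreal (FF (yv c r x (q (length ks))) t)" for x t
  proof -
    have "\<And>n. n < length ks \<Longrightarrow> yv c r (x(k:=t)) (q n) = yv c r x (q n)"
      using qks kn by (force simp: yv_def)
    moreover have "yv c r (x(k:=t)) (q (length ks)) = yv c r x (q (length ks))"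
      using qk kn by (force simp: yv_def)
    moreover have "\<And>n. n < length ks \<Longrightarrow> ks ! n \<noteq> k" using kn by auto
    ultimately show ?thesis by (simp add: nth_append)
  qed
  have sk: "set (ks@[k]) = insert k (set ks)" by simp
  have "(\<integral>\<^sup>+ x. (\<Prod>n<length (ks@[k]). ennreal (FF (yv c r x (q n)) (x ((ks@[k])!n)))) \<partial>PiM (set (ks@[k])) ?M)
      = (\<integral>\<^sup>+ x. (\<integral>\<^sup>+ t. (\<Prod>n<length (ks@[k]). ennreal (FF (yv c r (x(k:=t)) (q n)) ((x(k:=t)) ((ks@[k])!n)))) \<partial>lborel) \<partial>PiM (set ks) ?M)"
    unfolding sk by (rule product_nn_integral_insert[OF _ kn(1) fmeas]) simp
  also have "\<dots> = (\<integral>\<^sup>+ x. (\<integral>\<^sup>+ t. ?G x * ennreal (FF (yv c r x (q (length ks))) t) \<partial>lborel) \<partial>PiM (set ks) ?M)"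
    by (simp only: eq)
  also have "\<dots> = (\<integral>\<^sup>+ x. ?G x * (\<integral>\<^sup>+ t. ennreal (FF (yv c r x (q (length ks))) t) \<partial>lborel) \<partial>PiM (set ks) ?M)"
    by (intro nn_integral_cong nn_integral_cmult) measurable
  also have "\<dots> \<le> (\<integral>\<^sup>+ x. ?G x * ennreal (ln 4) \<partial>PiM (set ks) ?M)"
    by (intro nn_integral_mono mult_left_mono FF_int) auto
  also have "\<dots> = integral\<^sup>N (PiM (set ks) ?M) ?G * ennreal (ln 4)"
    using Gmeas by (rule nn_integral_multc)
  also have "\<dots> \<le> ennreal (ln 4) ^ length ks * ennreal (ln 4)"
    using IH by (rule mult_right_mono) auto
  finally show ?case by (simp add: mult.commute)
qed

lemma linked_bound:
  assumes "linked V inc L a b" "in_Delta V E inc L lam"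
  shows "lam a \<le> 2 * lam b \<and> lam b \<le> 2 * lam a"
proof -
  obtain v where v: "v \<in> V" "inc v = {#a, b, L v#}" using assms(1) unfolding linked_def by blast
  have t: "\<forall>e. e \<in># inc v \<longrightarrow> lam e \<le> sum_mset (image_mset lam (inc v - {#e#}))"
    and m: "\<forall>f. f \<in># inc v \<longrightarrow> lam (L v) \<le> lam f"
    using assms(2) v(1) unfolding in_Delta_def by auto
  have "lam a \<le> lam b + lam (L v)" using t v(2) by auto
  moreover have "lam b \<le> lam a + lam (L v)" using t v(2) by auto
  moreover have "lam (L v) \<le> lam a" "lam (L v) \<le> lam b" using m v(2) by auto
  ultimately show ?thesis by linarith
qed

lemma ks_nth:
  assumes "i < length es" "n < length es - 1"
  shows "(rev (take i es) @ drop (Suc i) es) ! n = (if n < i then es!(i-1-n) else es!(Suc n))"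
  using assms by (auto simp: nth_append rev_nth min_def)

theorem mainTheorem8:
  fixes V :: "'v set" and E :: "'e set" and inc :: "'v \<Rightarrow> 'e multiset"
    and L :: "'v \<Rightarrow> 'e" and es :: "'e list" and i :: nat and lam0 :: "'e \<Rightarrow> real"
  assumes "trivalent_graph V E inc"
    and "linking_choice V inc L"
    and "es \<noteq> []" and "distinct es" and "set es \<subseteq> E"
    and "\<And>j. Suc j < length es \<Longrightarrow> linked V inc L (es ! j) (es ! Suc j)"
    and "i < length es"
  shows "(\<integral>\<^sup>+ x. (if in_Delta V E inc L
                      (\<lambda>e. if e \<in> set es - {es ! i} then x e else lam0 e)
                  then ennreal (\<Prod>j\<in>set es - {es ! i}. 1 / x j) else 0)
            \<partial>(PiM (set es - {es ! i}) (\<lambda>_. lborel)))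
         \<le> ennreal ((ln 4) ^ (length es - 1))"
proof -
  note dist = assms(4) and ilt = assms(7)
  define ks where "ks = rev (take i es) @ drop (Suc i) es"
  define q where "q n = (if n = 0 \<or> n = i then es ! i else ks ! (n - 1))" for n
  define c where "c = lam0 (es ! i)"
  have lenks: "length ks = length es - 1" unfolding ks_def using ilt by auto
  have ksn: "n < length ks \<Longrightarrow> ks ! n = (if n < i then es!(i-1-n) else es!(Suc n))" for n
    unfolding ks_def using ks_nth[OF ilt, of n] lenks ks_def by simp
  have setks: "set ks = set es - {es ! i}"
  proof -
    have "es = take i es @ [es!i] @ drop (Suc i) es" using ilt by (simp add: Cons_nth_drop_Suc)
    then have "set es = set (take i es) \<union> {es!i} \<union> set (drop (Suc i) es)"
      by (metis Un_assoc empty_set list.simps(15) set_append Un_insert_left sup_bot_left)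
    moreover have "es!i \<notin> set (take i es)" "es!i \<notin> set (drop (Suc i) es)"
      using dist ilt by (auto simp: in_set_conv_nth nth_eq_iff_index_eq)
    ultimately show ?thesis unfolding ks_def by auto
  qed
  have distks: "distinct ks"
  proof -
    have "distinct (take i es @ drop (Suc i) es)"
      using dist by (metis distinct_take distinct_drop distinct_append set_take_disj_set_drop_if_distinct le_SucI order_refl)
    then show ?thesis unfolding ks_def by auto
  qed
  have rks: "es ! i \<notin> set ks" using setks by auto
  have qcond: "\<forall>n<length ks. q n \<in> insert (es!i) (set (take n ks))"
  proof (intro allI impI)
    fix n assume "n < length ks"
    then show "q n \<in> insert (es!i) (set (take n ks))"
      unfolding q_def by (auto simp: in_set_conv_nth intro!: exI[of _ "n - 1"])
  qed
  have adj: "\<exists>j. Suc j < length es \<and> ((ks!n = es!j \<and> q n = es!Suc j) \<or> (ks!n = es!Suc j \<and> q n = es!j))"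
    if "n < length ks" for n
  proof (cases "n < i")
    case True
    then have "ks!n = es!(i-1-n)" "q n = es!Suc (i-1-n)"
      using ksn[OF that] ksn[of "n-1"] that unfolding q_def by (auto simp: Suc_diff_Suc)
    then show ?thesis using True ilt by (intro exI[of _ "i-1-n"]) auto
  next
    case False
    then have "ks!n = es!Suc n" "q n = es!n"
      using ksn[OF that] ksn[of "n-1"] that unfolding q_def by auto
    then show ?thesis using that lenks by (intro exI[of _ n]) auto
  qed
  have point: "(if in_Delta V E inc L (\<lambda>e. if e \<in> set es - {es ! i} then x e else lam0 e)
                  then ennreal (\<Prod>j\<in>set es - {es ! i}. 1 / x j) else 0)
       \<le> (\<Prod>n<length ks. ennreal (FF (yv c (es!i) x (q n)) (x (ks!n))))" for x
  proof (cases "in_Delta V E inc L (\<lambda>e. if e \<in> set es - {es ! i} then x e else lam0 e)")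
    case False then show ?thesis by simp
  next
    case True
    define lam where "lam = (\<lambda>e. if e \<in> set es - {es ! i} then x e else lam0 e)"
    have D: "in_Delta V E inc L lam" using True lam_def by simp
    have fac: "FF (yv c (es!i) x (q n)) (x (ks!n)) = 1 / x (ks!n) \<and> 0 < x (ks!n)" if n: "n < length ks" for n
    proof -
      have kn: "ks!n \<in> set es - {es!i}" using n setks nth_mem by metis
      have "q n \<in> insert (es!i) (set ks)" using qcond n in_set_takeD by fastforce
      then have yq: "yv c (es!i) x (q n) = lam (q n)"
        unfolding yv_def lam_def c_def using setks by auto
      have xk: "x (ks!n) = lam (ks!n)" using kn lam_def by simp
      have pos: "0 < lam (ks!n)" using D kn assms(5) unfolding in_Delta_def by auto
      obtain j where j: "Suc j < length es"
        "(ks!n = es!j \<and> q n = es!Suc j) \<or> (ks!n = es!Suc j \<and> q n = es!j)"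
        using adj[OF n] by blast
      have "lam (es!j) \<le> 2 * lam (es!Suc j) \<and> lam (es!Suc j) \<le> 2 * lam (es!j)"
        using linked_bound[OF assms(6)[OF j(1)] D] .
      then have "lam (ks!n) \<le> 2 * lam (q n) \<and> lam (q n) / 2 \<le> lam (ks!n)"
        using j(2) by auto
      then show ?thesis using pos unfolding FF_def yq xk by auto
    qed
    have "(\<Prod>n<length ks. ennreal (FF (yv c (es!i) x (q n)) (x (ks!n))))
        = (\<Prod>n<length ks. ennreal (1 / x (ks!n)))"
      using fac by (intro prod.cong) auto
    also have "\<dots> = ennreal (\<Prod>n<length ks. 1 / x (ks!n))"
      using fac by (intro prod_ennreal) (auto simp: less_imp_le)
    also have "(\<Prod>n<length ks. 1 / x (ks!n)) = (\<Prod>j\<in>set es - {es ! i}. 1 / x j)"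
      using prod.reindex_bij_betw[OF bij_betw_nth[OF distks refl setks[symmetric]], of "\<lambda>j. 1 / x j"] by simp
    finally show ?thesis using True by simp
  qed
  have "(\<integral>\<^sup>+ x. (if in_Delta V E inc L
                      (\<lambda>e. if e \<in> set es - {es ! i} then x e else lam0 e)
                  then ennreal (\<Prod>j\<in>set es - {es ! i}. 1 / x j) else 0)
            \<partial>(PiM (set es - {es ! i}) (\<lambda>_. lborel)))
      \<le> (\<integral>\<^sup>+ x. (\<Prod>n<length ks. ennreal (FF (yv c (es!i) x (q n)) (x (ks!n)))) \<partial>PiM (set ks) (\<lambda>_. lborel))"
    unfolding setks by (intro nn_integral_mono point)
  also have "\<dots> \<le> ennreal (ln 4) ^ length ks"
    by (rule chain_int[OF distks rks qcond])
  also have "\<dots> = ennreal ((ln 4) ^ (length es - 1))"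
    using lenks by (simp add: ennreal_power)
  finally show ?thesis .
qed

end
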